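(* Let $q>0$ and $r\ge 0$ be real numbers. For every integer $n\ge 0$, $$\sum_{j=0}^n (-1)^n\, w(n,j)\,B_j^q(r)=\frac{n!}{n+1},$$ where $w(n,j)=w_{q,r}(n,j)$ and $B_j^q(r)$ are as defined in the context.
   Context: The Bernoulli polynomials with a $q$ parameter $B_n^q(r)$ are defined by the formal power series identity in $t$ $$\sum_{n=0}^{\infty}B_n^q(r)\frac{t^n}{n!}=\frac{q\,e^{rt}}{1-e^{qt}}\sum_{k=1}^{\infty}\left(\frac{1-e^{qt}}{q}\right)^k\frac{1}{k}.$$ Let $(x)_k=x(x-1)\cdots(x-k+1)$ denote the falling factorial ($(x)_0=1$). The $r$-Whitney numbers of the first kind $w(n,k)=w_{q,r}(n,k)$, $0\le k\le n$, are defined by the polynomial identity in $x$: $q^n(x)_n=\sum_{k=0}^n w(n,k)\,(qx+r)^k$. *)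

theory Defs
  imports "HOL-Analysis.Analysis" "HOL-Computational_Algebra.Formal_Power_Series"
begin

definition falling :: "real \<Rightarrow> nat \<Rightarrow> real" where
  "falling x k = (\<Prod>i<k. x - of_nat i)"

definition bq_u :: "real \<Rightarrow> real fps" where
  "bq_u q = fps_const (1 / q) * (1 - fps_exp q)"

text \<open>The formal sum S = sum_{k>=1} u^k / k. Since u has zero constant term,
  u^k has order at least k, so the n-th coefficient of S is the finite sum below.\<close>
definition bq_S :: "real \<Rightarrow> real fps" where
  "bq_S q = Abs_fps (\<lambda>n. \<Sum>k\<in>{1..n}. fps_nth (bq_u q ^ k) n / of_nat k)"

text \<open>Exponential generating function q e^{rt}/(1-e^{qt}) * S (exact fps division).\<close>
definition bq_egf :: "real \<Rightarrow> real \<Rightarrow> real fps" where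
  "bq_egf q r = (fps_const q * fps_exp r * bq_S q) / (1 - fps_exp q)"

definition bernoulli_q :: "real \<Rightarrow> nat \<Rightarrow> real \<Rightarrow> real" where
  "bernoulli_q q n r = fact n * fps_nth (bq_egf q r) n"

definition whitney1 :: "real \<Rightarrow> real \<Rightarrow> nat \<Rightarrow> nat \<Rightarrow> real" where
  "whitney1 q r n = (THE w. (\<forall>k>n. w k = 0) \<and>
      (\<forall>x. q ^ n * falling x n = (\<Sum>k\<le>n. w k * (q * x + r) ^ k)))"

end

theory Submission
  imports Defs
begin
unbundle no vec_syntax
unbundle fps_syntax

definition wpoly :: "real \<Rightarrow> real \<Rightarrow> nat \<Rightarrow> real poly" where
  "wpoly q r n = (\<Prod>i<n. [:-(r + q * of_nat i), 1:])"

lemma degree_wpoly: "degree (wpoly q r n) \<le> n"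
proof -
  have "degree (wpoly q r n) \<le> (\<Sum>i<n. degree [:-(r + q * of_nat i), 1:])"
    unfolding wpoly_def using degree_prod_sum_le[of "{..<n}" "\<lambda>i. [:-(r + q * of_nat i), 1:]"] by (simp add: o_def)
  also have "\<dots> = n" by simp
  finally show ?thesis .
qed

lemma poly_wpoly: "poly (wpoly q r n) (q * x + r) = q ^ n * falling x n"
proof -
  have "poly (wpoly q r n) (q * x + r) = (\<Prod>k<n. q * (x - of_nat k))"
    unfolding wpoly_def poly_prod by (intro prod.cong) (auto simp: algebra_simps)
  also have "\<dots> = q ^ n * falling x n"
    unfolding falling_def by (simp add: prod.distrib)
  finally show ?thesis .
qed

lemma poly_wpoly_sum: "poly (wpoly q r n) y = (\<Sum>k\<le>n. coeff (wpoly q r n) k * y ^ k)"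
proof -
  have "poly (wpoly q r n) y = (\<Sum>k\<le>degree (wpoly q r n). coeff (wpoly q r n) k * y ^ k)"
    by (rule poly_altdef)
  also have "\<dots> = (\<Sum>k\<le>n. coeff (wpoly q r n) k * y ^ k)"
    using degree_wpoly[of q r n]
    by (intro sum.mono_neutral_left) (auto simp: coeff_eq_0)
  finally show ?thesis .
qed

lemma whitney1_eq:
  assumes "q \<noteq> 0"
  shows "whitney1 q r n = (\<lambda>k. coeff (wpoly q r n) k)"
  unfolding whitney1_def
proof (rule the_equality)
  show "(\<forall>k>n. coeff (wpoly q r n) k = 0) \<and>
    (\<forall>x. q ^ n * falling x n = (\<Sum>k\<le>n. coeff (wpoly q r n) k * (q * x + r) ^ k))"
    using degree_wpoly[of q r n] poly_wpoly_sum[of q r n, symmetric] poly_wpoly[of q r n]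
    by (auto simp: coeff_eq_0)
next
  fix w assume H: "(\<forall>k>n. w k = 0) \<and>
      (\<forall>x. q ^ n * falling x n = (\<Sum>k\<le>n. w k * (q * x + r) ^ k))"
  define Q where "Q = (\<Sum>k\<le>n. monom (w k) k)"
  have "poly Q y = poly (wpoly q r n) y" for y
  proof -
    have y: "y = q * ((y - r) / q) + r" using assms by simp
    have "poly Q y = (\<Sum>k\<le>n. w k * y ^ k)" unfolding Q_def by (simp add: poly_sum poly_monom)
    also have "\<dots> = poly (wpoly q r n) y"
      using H poly_wpoly[of q r n "(y - r) / q"] y by simp
    finally show ?thesis .
  qed
  then have "Q = wpoly q r n" using poly_eq_poly_eq_iff by blast
  then have "coeff Q k = coeff (wpoly q r n) k" for k by simp
  moreover have "coeff Q k = (if k \<le> n then w k else 0)" for k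
    unfolding Q_def by (simp add: coeff_sum coeff_monom)
  ultimately show "w = (\<lambda>k. coeff (wpoly q r n) k)"
    using H by (metis not_le)
qed

lemma whitney1_prop:
  assumes "q \<noteq> 0"
  shows "(\<Sum>k\<le>n. whitney1 q r n k * (q * x + r) ^ k) = q ^ n * falling x n"
  using whitney1_eq[OF assms] poly_wpoly_sum[symmetric] poly_wpoly by simp


lemma u0: "bq_u q $ 0 = 0"
  unfolding bq_u_def by (simp add: fps_mult_nth)

lemma upow_nth0: "j < m \<Longrightarrow> (bq_u q ^ m) $ j = 0"
  by (rule startsby_zero_power_prefix[OF u0, rule_format])

definition TT :: "real \<Rightarrow> nat \<Rightarrow> real fps" where
  "TT q N = (\<Sum>m\<le>N. fps_const (1 / (of_nat m + 1)) * bq_u q ^ m)"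

definition WW :: "real \<Rightarrow> real fps" where
  "WW q = Abs_fps (\<lambda>j. TT q j $ j)"

lemma TT_stable: "j \<le> N \<Longrightarrow> TT q N $ j = TT q j $ j"
  unfolding TT_def fps_sum_nth
  by (rule sum.mono_neutral_right) (auto simp: upow_nth0)

lemma WW_nth: "j \<le> N \<Longrightarrow> WW q $ j = TT q N $ j"
  unfolding WW_def using TT_stable[of j N q] by simp

lemma uWW: "bq_u q * WW q = bq_S q"
proof (rule fps_ext)
  fix i
  have "(bq_u q * WW q) $ i = (\<Sum>k=0..i. bq_u q $ k * TT q i $ (i - k))"
    unfolding fps_mult_nth by (intro sum.cong) (auto simp: WW_nth)
  also have "\<dots> = (bq_u q * TT q i) $ i" by (simp add: fps_mult_nth)
  also have "\<dots> = (\<Sum>m\<le>i. (bq_u q ^ Suc m) $ i / (of_nat m + 1))"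
    unfolding TT_def sum_distrib_left fps_sum_nth
    by (intro sum.cong) (auto simp: mult.left_commute[of "bq_u q"])
  also have "\<dots> = (\<Sum>m=0..i. (\<lambda>k. (bq_u q ^ k) $ i / of_nat k) (Suc m))"
    by (simp add: atLeast0AtMost add.commute)
  also have "\<dots> = (\<Sum>k=Suc 0..Suc i. (bq_u q ^ k) $ i / of_nat k)"
    by (rule sum.shift_bounds_cl_Suc_ivl[symmetric])
  also have "\<dots> = (\<Sum>k\<in>{1..i}. (bq_u q ^ k) $ i / of_nat k)"
    using upow_nth0[of i "Suc i" q] by (simp add: sum.cl_ivl_Suc del: power_Suc)
  also have "\<dots> = bq_S q $ i" unfolding bq_S_def by simp
  finally show "(bq_u q * WW q) $ i = bq_S q $ i" .
qed

lemma egf_eq: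
  assumes "q \<noteq> 0"
  shows "bq_egf q r = fps_exp r * WW q"
proof -
  have 1: "1 - fps_exp q = fps_const q * bq_u q"
    unfolding bq_u_def using assms by (simp flip: mult.assoc)
  have nz: "1 - fps_exp q \<noteq> (0 :: real fps)"
  proof
    assume "1 - fps_exp q = (0 :: real fps)"
    then have "(1 - fps_exp q) $ 1 = (0 :: real fps) $ 1" by simp
    then show False using assms by simp
  qed
  have eq: "fps_const q * fps_exp r * bq_S q = (1 - fps_exp q) * (fps_exp r * WW q)"
    unfolding 1 uWW[symmetric] by (simp add: ac_simps)
  show ?thesis
    unfolding bq_egf_def eq using nz by (rule nonzero_mult_div_cancel_left)
qed

lemma egf_nth:
  assumes "q \<noteq> 0" "j \<le> N"
  shows "bq_egf q r $ j = (fps_exp r * TT q N) $ j"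
  unfolding egf_eq[OF assms(1)] fps_mult_nth
  using assms(2) by (intro sum.cong) (auto simp: WW_nth)

lemma neg1_fps: "(-1 :: real fps) ^ k = fps_const ((-1) ^ k)"
proof -
  have "(-1 :: real fps) = fps_const (-1)" by (metis fps_const_1_eq_1 fps_const_neg)
  then show ?thesis by (simp only: fps_const_power)
qed

lemma term_eq:
  fixes q r :: real
  shows "fps_exp r * (of_nat c * fps_exp q ^ i * (-1) ^ k) =
   fps_const (of_nat c * (-1) ^ k) * fps_exp (q * of_nat i + r)"
proof -
  have "fps_exp r * (of_nat c * fps_exp q ^ i * (-1) ^ k) =
     fps_const (of_nat c) * fps_const ((-1) ^ k) * (fps_exp (of_nat i * q) * fps_exp r)"
    unfolding neg1_fps fps_exp_power_mult fps_of_nat[symmetric] by (simp only: mult_ac)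
  also have "\<dots> = fps_const (of_nat c * (-1) ^ k) * fps_exp (q * of_nat i + r)"
    by (simp add: fps_exp_add_mult mult.commute)
  finally show ?thesis .
qed

lemma Eu_nth:
  assumes "q \<noteq> 0"
  shows "fact j * (fps_exp r * bq_u q ^ m) $ j =
    (-1/q)^m * (\<Sum>i\<le>m. of_nat (m choose i) * (-1)^(m-i) * (q * of_nat i + r)^j)"
proof -
  have u: "bq_u q = fps_const (-1/q) * (fps_exp q - 1)"
    unfolding bq_u_def by (rule fps_ext) (simp add: field_simps)
  have b: "(fps_exp q - 1 :: real fps)^m = (\<Sum>i\<le>m. of_nat (m choose i) * fps_exp q ^ i * (-1)^(m-i))"
    using binomial_ring[of "fps_exp q" "-1 :: real fps" m] by simp
  have "fps_exp r * bq_u q ^ m = fps_const ((-1/q)^m) * (fps_exp r * (fps_exp q - 1) ^ m)"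
    unfolding u power_mult_distrib fps_const_power by (simp only: mult_ac)
  also have "fps_exp r * (fps_exp q - 1) ^ m =
      (\<Sum>i\<le>m. fps_const (of_nat (m choose i) * (-1)^(m-i)) * fps_exp (q * of_nat i + r))"
    unfolding b sum_distrib_left term_eq ..
  finally show ?thesis
    by (simp add: fps_sum_nth sum_distrib_left sum_distrib_right mult_ac)
qed


lemma falling_nat_zero: "i < n \<Longrightarrow> falling (of_nat i) n = 0"
  unfolding falling_def by (rule prod_zero) auto

lemma falling_nat_same: "falling (of_nat n) n = fact n"
  unfolding falling_def fact_prod_rev
  by (simp add: atLeast0LessThan of_nat_diff)

definition AA :: "real \<Rightarrow> nat \<Rightarrow> nat \<Rightarrow> real" where
  "AA q m i = 1 / (of_nat m + 1) * (-1/q)^m * (of_nat (m choose i) * (-1)^(m-i))"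

lemma bern_expand:
  assumes "q \<noteq> 0" "j \<le> n"
  shows "bernoulli_q q j r = (\<Sum>m\<le>n. \<Sum>i\<le>m. AA q m i * (q * of_nat i + r)^j)"
proof -
  have "bernoulli_q q j r = fact j * (fps_exp r * TT q n) $ j"
    unfolding bernoulli_q_def egf_nth[OF assms] ..
  also have "fps_exp r * TT q n = (\<Sum>m\<le>n. fps_const (1 / (of_nat m + 1)) * (fps_exp r * bq_u q ^ m))"
    unfolding TT_def sum_distrib_left by (simp only: mult_ac)
  also have "fact j * \<dots> $ j = (\<Sum>m\<le>n. 1 / (of_nat m + 1) * (fact j * (fps_exp r * bq_u q ^ m) $ j))"
    unfolding fps_sum_nth fps_mult_left_const_nth sum_distrib_left by (rule sum.cong) simp_all
  also have "\<dots> = (\<Sum>m\<le>n. 1 / (of_nat m + 1) * ((-1/q)^m *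
      (\<Sum>i\<le>m. of_nat (m choose i) * (-1)^(m-i) * (q * of_nat i + r)^j)))"
    unfolding Eu_nth[OF assms(1)] ..
  also have "\<dots> = (\<Sum>m\<le>n. \<Sum>i\<le>m. AA q m i * (q * of_nat i + r)^j)"
    unfolding AA_def by (simp add: sum_distrib_left mult_ac)
  finally show ?thesis .
qed

lemma inner_sum:
  assumes "m \<le> n"
  shows "(\<Sum>i\<le>m. AA q m i * (q ^ n * falling (of_nat i) n)) = (if m = n then AA q n n * (q ^ n * fact n) else 0)"
proof -
  define F where "F i = AA q m i * (q ^ n * falling (of_nat i) n)" for i
  have "(\<Sum>i\<le>m. F i) = (if m = n then AA q n n * (q ^ n * fact n) else 0)"
  proof (cases "m = n")
    case True
    have "(\<Sum>i\<le>m. F i) = (\<Sum>i<m. F i) + F m"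
      using sum.lessThan_Suc[of F m] by (simp only: lessThan_Suc_atMost)
    also have "(\<Sum>i<m. F i) = 0"
      using True by (intro sum.neutral) (simp add: F_def falling_nat_zero)
    finally show ?thesis using True by (simp add: F_def falling_nat_same)
  next
    case False
    with assms have "m < n" by simp
    then have "(\<Sum>i\<le>m. F i) = 0"
      by (intro sum.neutral) (simp add: F_def falling_nat_zero)
    then show ?thesis using False by simp
  qed
  then show ?thesis unfolding F_def .
qed

theorem mainTheorem2:
  fixes q r :: real and n :: nat
  assumes "q > 0" and "r \<ge> 0"
  shows "(\<Sum>j\<le>n. (-1) ^ n * whitney1 q r n j * bernoulli_q q j r) = fact n / (of_nat n + 1)"
proof -
  have q: "q \<noteq> 0" using assms by simp
  define w where "w = whitney1 q r n"
  define X where "X i j = (q * of_nat i + r) ^ j" for i j :: nat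
  have "(\<Sum>j\<le>n. w j * bernoulli_q q j r) =
      (\<Sum>j\<le>n. \<Sum>m\<le>n. \<Sum>i\<le>m. AA q m i * (w j * X i j))"
  proof (intro sum.cong refl)
    fix j assume "j \<in> {..n}"
    then have "bernoulli_q q j r = (\<Sum>m\<le>n. \<Sum>i\<le>m. AA q m i * X i j)"
      unfolding X_def using bern_expand[OF q, of j n r] by simp
    then show "w j * bernoulli_q q j r = (\<Sum>m\<le>n. \<Sum>i\<le>m. AA q m i * (w j * X i j))"
      by (simp only: sum_distrib_left) (intro sum.cong refl; rule mult.left_commute)
  qed
  also have "\<dots> = (\<Sum>m\<le>n. \<Sum>j\<le>n. \<Sum>i\<le>m. AA q m i * (w j * X i j))"
    by (rule sum.swap)
  also have "\<dots> = (\<Sum>m\<le>n. \<Sum>i\<le>m. \<Sum>j\<le>n. AA q m i * (w j * X i j))"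
    by (rule sum.cong[OF refl], rule sum.swap)
  also have "\<dots> = (\<Sum>m\<le>n. \<Sum>i\<le>m. AA q m i * (\<Sum>j\<le>n. w j * X i j))"
    by (simp only: sum_distrib_left)
  also have "\<dots> = (\<Sum>m\<le>n. \<Sum>i\<le>m. AA q m i * (q ^ n * falling (of_nat i) n))"
    unfolding w_def X_def whitney1_prop[OF q] ..
  also have "\<dots> = (\<Sum>m\<le>n. if m = n then AA q n n * (q ^ n * fact n) else 0)"
    by (intro sum.cong refl) (rule inner_sum, simp)
  also have "\<dots> = AA q n n * (q ^ n * fact n)" by simp
  also have "\<dots> = (q ^ n * (-1/q)^n) * (fact n / (of_nat n + 1))"
    by (simp add: AA_def field_simps)
  also have "q ^ n * (-1/q)^n = (q * (-1/q))^n" by (simp only: power_mult_distrib)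
  also have "q * (-1/q) = -1" using q by simp
  finally have "(\<Sum>j\<le>n. w j * bernoulli_q q j r) = (-1)^n * (fact n / (of_nat n + 1))" .
  then have "(-1)^n * (\<Sum>j\<le>n. w j * bernoulli_q q j r) = fact n / (of_nat n + 1)"
    by simp
  then show ?thesis
    unfolding w_def sum_distrib_left by (simp only: mult.assoc)
qed

end
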